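(* Let $n\ge 0$ and $\alpha\ge 1$ be integers, $N=2^{n+1}$, $c=2^{\alpha}+1$, and consider the 1D-Tree and the $c$-DAG over the uniform dataset $\{0,\dots,N-1\}$ (as described in the context). For query length $s=1$, $\mathbb{E}_{\mathcal{I}_1}[\mathrm{level}_{c\text{-DAG}}(Q)-\mathrm{level}_{\mathrm{Tree}}(Q)]=0$. For every real $s$ with $1<s\le N$, \[ \mathbb{E}_{\mathcal{I}_s}\bigl[\mathrm{level}_{c\text{-DAG}}(Q)-\mathrm{level}_{\mathrm{Tree}}(Q)\bigr]<2\cdot\frac{c-2}{c-1}. \]
   Context: The 1D-Tree over $\mathcal{D}=\{0,\dots,N-1\}\subset[0,N)$ has levels $\ell=0,\dots,n+1$; its level-$\ell$ nodes are the intervals $[m2^{n-\ell+1},(m+1)2^{n-\ell+1})$, $m=0,\dots,2^\ell-1$. The $c$-DAG over $\mathcal{D}$ has levels $\ell=0,\dots,n+1$; with $u_\ell=2^{n-\ell+1}/(c-1)$, its level-$\ell$ nodes are the intervals $[mu_\ell,\,mu_\ell+2^{n-\ell+1})$, $m=0,1,\dots,(c-1)2^\ell-(c-1)$ (a node $[a,a+L)$ has children $[a+jL/(2(c-1)),\,a+jL/(2(c-1))+L/2)$, $j=0,\dots,c-1$). SRC-search returns a node of the deepest level whose interval contains the query $Q$; $\mathrm{level}_{\mathrm{Tree}}(Q)$ (resp. $\mathrm{level}_{c\text{-DAG}}(Q)$) is the largest $\ell$ such that some level-$\ell$ node of the respective structure contains $Q$. For query length $s$, $\mathcal{I}_s$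 is the distribution of $Q=[x,x+s)$ with $x$ uniform on $[0,N-s]$ (for $s=N$, $x=0$); for $s=1$ queries are single data points, i.e. $x$ uniform on the integers $\{0,\dots,N-1\}$. *)

theory Defs
  imports "HOL-Analysis.Analysis"
begin

definition tree_nodes :: "nat \<Rightarrow> nat \<Rightarrow> real set set" where
  "tree_nodes n l = (\<lambda>m. {real m * 2^(n+1-l) ..< (real m + 1) * 2^(n+1-l)}) ` {..<2^l}"

definition dag_nodes :: "nat \<Rightarrow> nat \<Rightarrow> nat \<Rightarrow> real set set" where
  "dag_nodes c n l = (\<lambda>m. {real m * (2^(n+1-l) / (real c - 1)) ..<
                            real m * (2^(n+1-l) / (real c - 1)) + 2^(n+1-l)})
                     ` {0..(c-1)*2^l - (c-1)}"

definition level_tree :: "nat \<Rightarrow> real set \<Rightarrow> nat" where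
  "level_tree n Q = (GREATEST l. l \<le> n+1 \<and> (\<exists>I\<in>tree_nodes n l. Q \<subseteq> I))"

definition level_dag :: "nat \<Rightarrow> nat \<Rightarrow> real set \<Rightarrow> nat" where
  "level_dag c n Q = (GREATEST l. l \<le> n+1 \<and> (\<exists>I\<in>dag_nodes c n l. Q \<subseteq> I))"

definition level_diff :: "nat \<Rightarrow> nat \<Rightarrow> real \<Rightarrow> real \<Rightarrow> real" where
  "level_diff c n s x = real (level_dag c n {x..<x+s}) - real (level_tree n {x..<x+s})"

end

theory Submission
  imports Defs
begin

lemma ico_subset_iff:
  fixes x s a b :: real
  assumes "0 < s"
  shows "{x..<x+s} \<subseteq> {a..<b} \<longleftrightarrow> a \<le> x \<and> x + s \<le> b"
  using assms atLeastLessThan_subset_iff[of x "x+s" a b] by auto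

lemma pow_split:
  assumes "l \<le> n+1"
  shows "(2::real)^l * 2^(n+1-l) = 2^(n+1)"
  using assms by (simp add: power_add[symmetric])

lemma tree_iff:
  fixes n l :: nat and x s :: real
  assumes l: "l \<le> n+1" and x: "0 \<le> x" "x + s \<le> 2^(n+1)" and s: "0 < s"
  shows "(\<exists>I\<in>tree_nodes n l. {x..<x+s} \<subseteq> I) \<longleftrightarrow>
     s \<le> 2^(n+1-l) \<and> \<not>(\<exists>j\<in>{1..<(2::nat)^l}. x < real j * 2^(n+1-l) \<and> real j * 2^(n+1-l) < x+s)"
    (is "?A \<longleftrightarrow> ?B")
proof -
  define L :: real where "L = 2^(n+1-l)"
  have L0: "L > 0" by (simp add: L_def)
  have NL: "(2::real)^l * L = 2^(n+1)" using pow_split[OF l] by (simp add: L_def)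
  have A: "?A \<longleftrightarrow> (\<exists>m<(2::nat)^l. real m * L \<le> x \<and> x + s \<le> (real m + 1) * L)"
    unfolding tree_nodes_def L_def using ico_subset_iff[OF s] by auto
  show ?thesis
  proof
    assume ?A
    then obtain m where m: "m < 2^l" "real m * L \<le> x" "x + s \<le> (real m + 1) * L" using A by blast
    have "s \<le> L" using m by (simp add: algebra_simps)
    moreover have "\<not> (x < real j * L \<and> real j * L < x+s)" for j
    proof
      assume h: "x < real j * L \<and> real j * L < x+s"
      then have "real m * L < real j * L" "real j * L < (real m + 1) * L" using m by auto
      then have "real m < real j" "real j < real (m + 1)" using L0 by (simp_all add: mult_less_cancel_right)
      then have "m < j" "j < m + 1" by (simp_all only: of_nat_less_iff)
      then show False by linarith
    qed
    ultimately show ?B unfolding L_def by blast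
  next
    assume B: ?B
    define m where "m = nat (floor (x / L))"
    have rm: "real m = of_int (floor (x/L))" using x L0 by (simp add: m_def)
    have m1: "real m * L \<le> x" using rm L0
      by (metis of_int_floor_le pos_le_divide_eq)
    have m2: "x < (real m + 1) * L" using rm L0
      by (metis divide_less_eq real_of_int_floor_add_one_gt)
    have "real m * L < 2^l * L" using m1 m2 x s NL by linarith
    then have "real m < 2^l" using L0 by (simp add: mult_less_cancel_right)
    then have mlt: "m < 2^l"
      by (metis of_nat_less_numeral_power_cancel_iff numeral_2_eq_2 of_nat_numeral)
    have "x + s \<le> (real m + 1) * L"
    proof (rule ccontr)
      assume "\<not> ?thesis"
      then have h: "(real (m+1)) * L < x + s" by (simp add: add.commute)
      have "real (m+1) * L < 2^l * L" using h x NL by linarith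
      then have "real (m+1) < 2^l" using L0 by (simp add: mult_less_cancel_right)
      then have "m+1 < 2^l"
        by (metis of_nat_less_numeral_power_cancel_iff numeral_2_eq_2 of_nat_numeral)
      then have "m+1 \<in> {1..<(2::nat)^l}" by simp
      moreover have "x < real (m+1) * L" using m2 by (simp add: add.commute)
      ultimately show False using B h unfolding L_def by blast
    qed
    then show ?A using A mlt m1 by blast
  qed
qed

lemma dag_iff:
  fixes n l c :: nat and x s :: real
  assumes s: "0 < s"
  shows "(\<exists>I\<in>dag_nodes c n l. {x..<x+s} \<subseteq> I) \<longleftrightarrow>
     (\<exists>m\<le>(c-1)*2^l-(c-1). real m * (2^(n+1-l) / (real c - 1)) \<le> x \<and>
        x + s \<le> real m * (2^(n+1-l) / (real c - 1)) + 2^(n+1-l))"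
  unfolding dag_nodes_def using ico_subset_iff[OF s] by auto

lemma dag_M:
  fixes c l :: nat
  assumes "c \<ge> 1"
  shows "real ((c-1)*2^l-(c-1)) = (real c - 1) * (2^l - 1)"
proof -
  have h: "(c-1)*1 \<le> (c-1)*2^l" by (intro mult_le_mono2) simp
  have "real ((c-1)*2^l-(c-1)) = real ((c-1)*2^l) - real (c-1)"
    using h by (simp only: of_nat_diff mult_1_right)
  also have "\<dots> = real (c-1) * 2^l - real (c-1)" by simp
  also have "real (c-1) = real c - 1" using assms by (simp add: of_nat_diff)
  finally show ?thesis by (simp add: algebra_simps)
qed

lemma dag_full:
  fixes n l c :: nat and x s :: real
  assumes c: "c \<ge> 2" and l: "l \<le> n+1" and x: "0 \<le> x" "x + s \<le> 2^(n+1)" and s: "0 < s"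
    and big: "2^(n+1-l) / (real c - 1) \<le> 2^(n+1-l) - s"
  shows "\<exists>I\<in>dag_nodes c n l. {x..<x+s} \<subseteq> I"
proof -
  define L :: real where "L = 2^(n+1-l)"
  define d :: real where "d = real c - 1"
  define u where "u = L / d"
  define M where "M = (c-1)*2^l-(c-1)"
  have d1: "d \<ge> 1" using c by (simp add: d_def)
  have L0: "L > 0" by (simp add: L_def)
  have u0: "u > 0" using d1 L0 by (simp add: u_def)
  have NL: "(2::real)^l * L = 2^(n+1)" using pow_split[OF l] by (simp add: L_def)
  have rM: "real M = d * (2^l - 1)" using dag_M[of c l] c by (simp add: M_def d_def)
  have Mu: "real M * u = 2^(n+1) - L"
    unfolding rM u_def using d1 NL by (simp add: field_simps)
  define q where "q = nat (floor (x / u))"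
  have rq: "real q = of_int (floor (x/u))" using x u0 by (simp add: q_def)
  have q1: "real q * u \<le> x" using rq u0
    by (metis of_int_floor_le pos_le_divide_eq)
  have q2: "x < (real q + 1) * u" using rq u0
    by (metis divide_less_eq real_of_int_floor_add_one_gt)
  have "\<exists>m\<le>M. real m * u \<le> x \<and> x + s \<le> real m * u + L"
  proof (cases "q \<le> M")
    case True
    have "u \<le> L - s" using big unfolding u_def L_def d_def .
    then have "x + s \<le> real q * u + L" using q2 by (simp add: algebra_simps)
    then show ?thesis using True q1 by blast
  next
    case False
    then have "real M + 1 \<le> real q" by simp
    then have "(real M + 1) * u \<le> real q * u" using u0 by (simp add: mult_right_mono)
    then have "real M * u \<le> x" using q1 u0 by (simp add: algebra_simps)
    moreover have "x + s \<le> real M * u + L" using Mu x by simp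
    ultimately show ?thesis by blast
  qed
  then show ?thesis unfolding dag_iff[OF s] M_def u_def L_def d_def by blast
qed

lemma dag_small:
  fixes n l c :: nat and x s :: real
  assumes s: "2^(n+1-l) < s"
  shows "\<not> (\<exists>I\<in>dag_nodes c n l. {x..<x+s} \<subseteq> I)"
proof -
  have "0 < s" using s by (smt (verit) zero_less_power)
  then show ?thesis unfolding dag_iff[OF \<open>0 < s\<close>] using s by auto
qed

lemma sum_indicator_disjoint:
  fixes S :: "'i \<Rightarrow> 'a set"
  assumes "finite A" and disj: "\<And>i j. i \<in> A \<Longrightarrow> j \<in> A \<Longrightarrow> x \<in> S i \<Longrightarrow> x \<in> S j \<Longrightarrow> i = j"
  shows "(\<Sum>i\<in>A. indicator (S i) x) = (of_bool (\<exists>i\<in>A. x \<in> S i) :: real)"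
proof (cases "\<exists>i\<in>A. x \<in> S i")
  case True
  then obtain i0 where i0: "i0 \<in> A" "x \<in> S i0" by blast
  have "(\<Sum>i\<in>A. indicator (S i) x) = (\<Sum>i\<in>A. if i = i0 then 1 else (0::real))"
    by (rule sum.cong) (use i0 disj in \<open>auto simp: indicator_def\<close>)
  also have "\<dots> = 1" using i0 assms(1) by simp
  finally show ?thesis using True by simp
next
  case False
  then show ?thesis by (simp add: indicator_def)
qed

lemma pow_mono_le: "a \<le> b \<Longrightarrow> (2::real)^a \<le> 2^b"
  by (simp add: power_increasing)

lemma int_ind_open:
  fixes a b lo hi :: real
  assumes "a \<le> b" "lo \<le> a" "b \<le> hi"
  shows "(indicator {a<..<b} has_integral (b - a)) {lo..hi}"
proof -
  have "((\<lambda>x. 1::real) has_integral (b - a)) {a..b}"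
    using has_integral_const_real[of "1::real" a b] assms by simp
  then have "((\<lambda>x. 1::real) has_integral (b - a)) {a<..<b}"
    using has_integral_open_interval[of "\<lambda>x. 1::real" "b-a" a b] by simp
  moreover have sub: "{a<..<b} \<subseteq> {lo..hi}" using assms by auto
  ultimately have "((\<lambda>x. if x \<in> {a<..<b} then 1 else 0::real) has_integral (b - a)) {lo..hi}"
    using has_integral_restrict[OF sub, of "\<lambda>x. 1::real"] by simp
  moreover have "indicator {a<..<b} = (\<lambda>x. if x \<in> {a<..<b} then 1 else 0::real)"
    by (rule ext) (simp add: indicator_def)
  ultimately show ?thesis by simp
qed

lemma int_ind_closed:
  fixes a b lo hi :: real
  assumes "a \<le> b" "lo \<le> a" "b \<le> hi"
  shows "(indicator {a..b} has_integral (b - a)) {lo..hi}"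
proof -
  have "((\<lambda>x. 1::real) has_integral (b - a)) {a..b}"
    using has_integral_const_real[of "1::real" a b] assms by simp
  moreover have sub: "{a..b} \<subseteq> {lo..hi}" using assms by auto
  ultimately have "((\<lambda>x. if x \<in> {a..b} then 1 else 0::real) has_integral (b - a)) {lo..hi}"
    using has_integral_restrict[OF sub, of "\<lambda>x. 1::real"] by simp
  moreover have "indicator {a..b} = (\<lambda>x. if x \<in> {a..b} then 1 else 0::real)"
    by (rule ext) (simp add: indicator_def)
  ultimately show ?thesis by simp
qed

lemma of_bool_not: "of_bool (\<not>P) = (1::real) - of_bool P" by (cases P) auto

lemma lin_aux: "3*L \<le> Q \<Longrightarrow> A = 2*RL - Q \<Longrightarrow> s \<le> L \<Longrightarrow> 0 < L \<Longrightarrow> (A::real) < 2*(RL - s)"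
  by (simp add: algebra_simps)

lemma final_ineq:
  fixes d R K L s :: real
  assumes d: "d \<ge> 2" and R: "R \<ge> 1 + K" and K: "K \<ge> 0" and K0: "K = 0 \<Longrightarrow> R = 1"
    and K1: "K \<noteq> 0 \<Longrightarrow> K \<ge> 1"
    and L: "L > 0" and s: "0 < s" "s \<le> L" "s < R * L"
  shows "(if L - s < L/d then d*((2*R-2-K)* s - ((R*L - s) - (d*(R-1)+1)*(L-s))) else d*((2*R-2-K)* s))
     < 2*(d-1)*(R*L-s)"
proof (cases "L - s < L/d")
  case True
  define F where "F = d*((2*R-2-K)* s - ((R*L - s) - (d*(R-1)+1)*(L-s))) - 2*(d-1)*(R*L-s)"
  define FL where "FL = L*((R-1)*(2-d) - d*K)"
  define B where "B = d*(2*R-2-K) - d^2*(R-1) + 2*(d-1)"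
  have eq: "F = FL - B*(L - s)" unfolding F_def FL_def B_def by (simp add: algebra_simps power2_eq_square)
  have eq2: "d*FL - B*L = -((d-1)*L*(d*K+2))" unfolding FL_def B_def by (simp add: algebra_simps power2_eq_square)
  have "F < 0"
  proof (cases "B \<ge> 0")
    case True
    have Bn: "B*(L-s) \<ge> 0" using True s by simp
    have a: "(R-1)*(2-d) \<le> 0" using R K d by (intro mult_nonneg_nonpos) auto
    show ?thesis
    proof (cases "K = 0")
      case True
      then have R1: "R = 1" using K0 by simp
      then have "L - s > 0" using s by simp
      moreover have "B > 0" using R1 True d unfolding B_def by simp
      ultimately have "B*(L-s) > 0" by simp
      moreover have "FL = 0" using R1 True unfolding FL_def by simp
      ultimately show ?thesis using eq by simp
    next
      case False
      then have "d*K > 0" using K d by simp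
      then have "FL < 0" unfolding FL_def using a L by (simp add: mult_pos_neg)
      then show ?thesis using eq Bn by simp
    qed
  next
    case False
    have d0: "d > 0" using d by simp
    have "L - s < L/d" using True .
    then have "d*(L - s) < L" using d0 by (simp add: field_simps)
    then have "(-B)*(d*(L - s)) < (-B)*L" using False by (intro mult_strict_left_mono) auto
    moreover have "d*F = d*FL + (-B)*(d*(L - s))" unfolding eq by (simp add: algebra_simps)
    ultimately have "d*F < d*FL - B*L" by simp
    also have "\<dots> \<le> 0" unfolding eq2 using d L K
      by (simp add: neg_le_0_iff_le)
    finally show ?thesis using d0 by (simp add: mult_less_0_iff)
  qed
  then show ?thesis using True unfolding F_def by simp
next
  case False
  have d0: "d > 0" using d by simp
  have "L/d \<le> L - s" using False by simp
  then have sd: "s*d \<le> (d-1)*L" using d0 by (simp add: field_simps)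
  show ?thesis
  proof (cases "K = 0")
    case True
    then have "R = 1" using K0 by simp
    then show ?thesis using False True s d by simp
  next
    case K1': False
    then have K1: "K \<ge> 1" using K1 by simp
    have c0: "2*R-2-K \<ge> 0" using R K1 by simp
    have "d*((2*R-2-K)* s) = (2*R-2-K)*(s*d)" by simp
    also have "\<dots> \<le> (2*R-2-K)*((d-1)*L)" using c0 sd by (intro mult_left_mono) auto
    also have "\<dots> < 2*(d-1)*(R*L-s)"
    proof -
      have "3*L \<le> (2+K)*L" using K1 L by (intro mult_right_mono) auto
      moreover have "(2*R-2-K)*L = 2*(R*L) - (2+K)*L" by (simp add: algebra_simps)
      ultimately have "(2*R-2-K)*L < 2*(R*L - s)" using s L lin_aux by blast
      then have "(d-1)*((2*R-2-K)*L) < (d-1)*(2*(R*L - s))" using d by (intro mult_strict_left_mono) auto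
      then show ?thesis by (simp add: algebra_simps)
    qed
    finally show ?thesis using False by simp
  qed
qed


lemma sum_pow_minus: "(\<Sum>l=1..k. (2::real)^l - 1) = 2*2^k - 2 - real k"
  by (induction k) (auto simp: algebra_simps)

locale setting =
  fixes n c k :: nat and s :: real
  assumes c3: "c \<ge> 3" and kn: "k \<le> n" and s1: "2^(n-k) < s" and s2: "s \<le> 2^(n+1-k)"
begin

lemma s0: "0 < s" using s1 by (smt (verit) zero_less_power)

lemma dag_level:
  assumes x: "0 \<le> x" "x + s \<le> 2^(n+1)"
  shows "level_dag c n {x..<x+s} =
     (if (\<exists>I\<in>dag_nodes c n k. {x..<x+s} \<subseteq> I) then k else k - 1)"
proof -
  let ?D = "\<lambda>l. \<exists>I\<in>dag_nodes c n l. {x..<x+s} \<subseteq> I"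
  have big: "\<not> ?D l" if "l > k" for l
  proof -
    have "(2::real)^(n+1-l) \<le> 2^(n-k)" using that by (intro pow_mono_le) simp
    then have "(2::real)^(n+1-l) < s" using s1 by linarith
    then show ?thesis by (rule dag_small)
  qed
  have D0: "?D 0" unfolding dag_iff[OF s0] using x by (intro exI[of _ 0]) simp
  show ?thesis
  proof (cases "?D k")
    case True
    have "level_dag c n {x..<x+s} = k" unfolding level_dag_def
      by (rule Greatest_equality) (use True kn big in \<open>auto simp: not_less[symmetric]\<close>)
    then show ?thesis using True by simp
  next
    case False
    then have k1: "k \<ge> 1" using D0 by (cases k) auto
    have Dk1: "?D (k-1)"
    proof (rule dag_full)
      show "2 \<le> c" using c3 by simp
      show "k - 1 \<le> n + 1" using kn by simp
      have e: "(2::real)^(n+1-(k-1)) = 2 * 2^(n+1-k)" using k1 kn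
        by (metis Suc_diff_le Suc_eq_plus1 add_diff_cancel_right' diff_Suc_Suc le_add_diff_inverse
            le_add_diff_inverse2 power_Suc add_Suc_right add_diff_cancel_left' nat_le_linear)
      have "real c - 1 \<ge> 2" using c3 by simp
      then have "2^(n+1-(k-1)) / (real c - 1) \<le> (2::real)^(n+1-(k-1)) / 2"
        by (intro divide_left_mono) auto
      then show "2^(n+1-(k-1)) / (real c - 1) \<le> (2::real)^(n+1-(k-1)) - s" using s2 e by simp
    qed (use x s0 in auto)
    have "level_dag c n {x..<x+s} = k - 1" unfolding level_dag_def
    proof (rule Greatest_equality)
      show "k - 1 \<le> n + 1 \<and> ?D (k-1)" using Dk1 kn by simp
      fix y assume "y \<le> n + 1 \<and> ?D y"
      then have "y \<le> k" "y \<noteq> k" using big False by (auto simp: not_less[symmetric])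
      then show "y \<le> k - 1" by simp
    qed
    then show ?thesis using False by simp
  qed
qed

lemma tree_step:
  assumes x: "0 \<le> x" "x + s \<le> 2^(n+1)" and l: "l + 1 \<le> n + 1"
    and T: "\<exists>I\<in>tree_nodes n (l+1). {x..<x+s} \<subseteq> I"
  shows "\<exists>I\<in>tree_nodes n l. {x..<x+s} \<subseteq> I"
proof -
  have e: "(2::real)^(n+1-l) = 2 * 2^(n+1-(l+1))" using l
    by (metis Suc_diff_le Suc_eq_plus1 add_le_cancel_right diff_Suc_Suc power_Suc)
  from T have B: "s \<le> 2^(n+1-(l+1))" "\<not>(\<exists>j\<in>{1..<(2::nat)^(l+1)}. x < real j * 2^(n+1-(l+1)) \<and> real j * 2^(n+1-(l+1)) < x+s)"
    using tree_iff[of "l+1" n x s] l x s0 by auto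
  have "(0::real) \<le> 2^(n+1-(l+1))" by simp
  then have "s \<le> 2^(n+1-l)" using B(1) e by linarith
  moreover have "\<not>(\<exists>j\<in>{1..<(2::nat)^l}. x < real j * 2^(n+1-l) \<and> real j * 2^(n+1-l) < x+s)"
  proof
    assume "\<exists>j\<in>{1..<(2::nat)^l}. x < real j * 2^(n+1-l) \<and> real j * 2^(n+1-l) < x+s"
    then obtain j where j: "j \<in> {1..<(2::nat)^l}" "x < real j * 2^(n+1-l)" "real j * 2^(n+1-l) < x+s" by blast
    have "2*j \<in> {1..<(2::nat)^(l+1)}" using j(1) by auto
    moreover have "real (2*j) * 2^(n+1-(l+1)) = real j * 2^(n+1-l)" using e by simp
    ultimately show False using B(2) j by metis
  qed
  ultimately show ?thesis using tree_iff[of l n x s] l x s0 by auto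
qed

lemma tree_down:
  assumes x: "0 \<le> x" "x + s \<le> 2^(n+1)" and l: "l \<le> n + 1"
    and T: "\<exists>I\<in>tree_nodes n l. {x..<x+s} \<subseteq> I"
  shows "\<exists>I\<in>tree_nodes n (l - i). {x..<x+s} \<subseteq> I"
proof (induction i)
  case 0 then show ?case using T by simp
next
  case (Suc i)
  show ?case
  proof (cases "l - i = 0")
    case True then show ?thesis using Suc by simp
  next
    case False
    then have "l - Suc i + 1 = l - i" by simp
    then show ?thesis using tree_step[OF x, of "l - Suc i"] Suc l by simp
  qed
qed

lemma tree_small:
  assumes x: "0 \<le> x" "x + s \<le> 2^(n+1)" and l: "k < l" "l \<le> n + 1"
  shows "\<not> (\<exists>I\<in>tree_nodes n l. {x..<x+s} \<subseteq> I)"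
proof -
  have "(2::real)^(n+1-l) \<le> 2^(n-k)" using l by (intro pow_mono_le) simp
  then have "(2::real)^(n+1-l) < s" using s1 by linarith
  then show ?thesis using tree_iff[of l n x s] l x s0 by auto
qed

lemma sum_ifle: "g \<le> k \<Longrightarrow> (\<Sum>l=1..k. if l \<le> g then 0 else 1::real) = real k - real g"
proof (induction k)
  case 0 then show ?case by simp
next
  case (Suc k)
  show ?case
  proof (cases "g = Suc k")
    case True
    then have "(\<Sum>l=1..Suc k. if l \<le> g then 0 else 1::real) = 0" by (intro sum.neutral) auto
    then show ?thesis using True by simp
  next
    case False
    then show ?thesis using Suc by simp
  qed
qed

lemma tree_level:
  assumes x: "0 \<le> x" "x + s \<le> 2^(n+1)"
  shows "real k - real (level_tree n {x..<x+s}) =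
     (\<Sum>l=1..k. of_bool (\<not> (\<exists>I\<in>tree_nodes n l. {x..<x+s} \<subseteq> I)))"
proof -
  let ?T = "\<lambda>l. \<exists>I\<in>tree_nodes n l. {x..<x+s} \<subseteq> I"
  let ?P = "\<lambda>l. l \<le> n+1 \<and> ?T l"
  define g where "g = level_tree n {x..<x+s}"
  have T0: "?T 0" using tree_iff[of 0 n x s, OF _ x s0] x by simp
  have P0: "?P 0" using T0 by simp
  have bnd: "\<And>y. ?P y \<Longrightarrow> y \<le> n+1" by simp
  have Pg: "?P g" unfolding g_def level_tree_def by (rule GreatestI_nat[where P="?P", OF P0 bnd])
  have ge: "y \<le> g" if "?P y" for y unfolding g_def level_tree_def by (rule Greatest_le_nat[where P="?P", OF that bnd])
  have gk: "g \<le> k" using Pg tree_small[OF x, of g] by (auto simp: not_less[symmetric])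
  have "of_bool (\<not> ?T l) = (if l \<le> g then 0 else 1::real)" if "l \<in> {1..k}" for l
  proof (cases "l \<le> g")
    case True
    have "?T (g - (g - l))" using tree_down[OF x _ Pg[THEN conjunct2], of "g-l"] Pg by simp
    then show ?thesis using True by simp
  next
    case False
    then have "\<not> ?T l" using ge[of l] that kn by auto
    then show ?thesis using False by simp
  qed
  then have "(\<Sum>l=1..k. of_bool (\<not> ?T l)) = (\<Sum>l=1..k. if l \<le> g then 0 else 1::real)"
    by (rule sum.cong[OF refl])
  then show ?thesis using sum_ifle[OF gk] g_def by simp
qed

definition "Lk = (2::real)^(n+1-k)"
definition "uk = Lk / (real c - 1)"
definition "Mk = (c-1)*2^k-(c-1)"

lemma D0_true:
  assumes x: "0 \<le> x" "x + s \<le> 2^(n+1)"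
  shows "\<exists>I\<in>dag_nodes c n 0. {x..<x+s} \<subseteq> I"
  unfolding dag_iff[OF s0] using x by (intro exI[of _ 0]) simp

lemma notT_ind:
  assumes x: "0 \<le> x" "x + s \<le> 2^(n+1)" and l: "l \<in> {1..k}"
  shows "(of_bool (\<not> (\<exists>I\<in>tree_nodes n l. {x..<x+s} \<subseteq> I)) :: real) =
    (\<Sum>j\<in>{1..<(2::nat)^l}. indicator {real j * 2^(n+1-l) - s<..<real j * 2^(n+1-l)} x)"
proof -
  define L :: real where "L = 2^(n+1-l)"
  have h: "(2::real)^(n+1-k) \<le> 2^(n+1-l)" using l by (intro pow_mono_le) auto
  have sL: "s \<le> L" using s2 h unfolding L_def by linarith
  have lt: "l \<le> n+1" using l kn by auto
  have iff: "(\<not> (\<exists>I\<in>tree_nodes n l. {x..<x+s} \<subseteq> I)) \<longleftrightarrow>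
      (\<exists>j\<in>{1..<(2::nat)^l}. x \<in> {real j * L - s<..<real j * L})"
    using tree_iff[OF lt x s0] sL by (auto simp: L_def algebra_simps)
  have disj: "i = j" if "x \<in> {real i * L - s<..<real i * L}" "x \<in> {real j * L - s<..<real j * L}" for i j
  proof (rule ccontr)
    assume "i \<noteq> j"
    then consider "i < j" | "j < i" by linarith
    then show False
    proof cases
      case 1
      then have "real i + 1 \<le> real j" by simp
      then have "(real i + 1) * L \<le> real j * L" by (intro mult_right_mono) (auto simp: L_def)
      then show False using that sL by (simp add: algebra_simps)
    next
      case 2
      then have "real j + 1 \<le> real i" by simp
      then have "(real j + 1) * L \<le> real i * L" by (intro mult_right_mono) (auto simp: L_def)
      then show False using that sL by (simp add: algebra_simps)
    qed
  qed
  have S: "(\<Sum>j\<in>{1..<(2::nat)^l}. indicator {real j * L - s<..<real j * L} x) =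
     (of_bool (\<exists>j\<in>{1..<(2::nat)^l}. x \<in> {real j * L - s<..<real j * L}) :: real)"
    by (rule sum_indicator_disjoint) (use disj in auto)
  show ?thesis using S[unfolded L_def] iff[unfolded L_def] by (simp only:)
qed

lemma notD_big:
  assumes x: "0 \<le> x" "x + s \<le> 2^(n+1)" and big: "uk \<le> Lk - s"
  shows "\<exists>I\<in>dag_nodes c n k. {x..<x+s} \<subseteq> I"
  by (rule dag_full) (use c3 kn x s0 big in \<open>auto simp: uk_def Lk_def\<close>)

lemma notD_small:
  assumes x: "0 \<le> x" "x + s \<le> 2^(n+1)" and small: "Lk - s < uk"
  shows "(of_bool (\<not> (\<exists>I\<in>dag_nodes c n k. {x..<x+s} \<subseteq> I)) :: real) =
    1 - (\<Sum>m\<in>{0..Mk}. indicator {real m * uk .. real m * uk + Lk - s} x)"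
proof -
  have u0: "uk > 0" using c3 by (simp add: uk_def Lk_def)
  have iff: "(\<exists>I\<in>dag_nodes c n k. {x..<x+s} \<subseteq> I) \<longleftrightarrow>
      (\<exists>m\<in>{0..Mk}. x \<in> {real m * uk .. real m * uk + Lk - s})"
    unfolding dag_iff[OF s0] Mk_def uk_def Lk_def by (auto simp: algebra_simps)
  have disj: "i = j" if "x \<in> {real i * uk .. real i * uk + Lk - s}" "x \<in> {real j * uk .. real j * uk + Lk - s}" for i j
  proof (rule ccontr)
    assume "i \<noteq> j"
    then consider "i < j" | "j < i" by linarith
    then show False
    proof cases
      case 1
      then have "real i + 1 \<le> real j" by simp
      then have "(real i + 1) * uk \<le> real j * uk" using u0 by (intro mult_right_mono) auto
      then show False using that small by (simp add: algebra_simps)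
    next
      case 2
      then have "real j + 1 \<le> real i" by simp
      then have "(real j + 1) * uk \<le> real i * uk" using u0 by (intro mult_right_mono) auto
      then show False using that small by (simp add: algebra_simps)
    qed
  qed
  have "(\<Sum>m\<in>{0..Mk}. indicator {real m * uk .. real m * uk + Lk - s} x) =
     (of_bool (\<exists>m\<in>{0..Mk}. x \<in> {real m * uk .. real m * uk + Lk - s}) :: real)"
    by (rule sum_indicator_disjoint) (use disj in auto)
  then show ?thesis unfolding iff by (simp only: of_bool_not)
qed

lemma diff_formula:
  assumes x: "0 \<le> x" "x + s \<le> 2^(n+1)"
  shows "level_diff c n s x =
    (\<Sum>l=1..k. \<Sum>j\<in>{1..<(2::nat)^l}. indicator {real j * 2^(n+1-l) - s<..<real j * 2^(n+1-l)} x)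
    - (if Lk - s < uk then 1 - (\<Sum>m\<in>{0..Mk}. indicator {real m * uk .. real m * uk + Lk - s} x) else 0)"
proof -
  let ?D = "\<exists>I\<in>dag_nodes c n k. {x..<x+s} \<subseteq> I"
  have dl: "real (level_dag c n {x..<x+s}) = real k - of_bool (\<not> ?D)"
  proof (cases ?D)
    case True then show ?thesis using dag_level[OF x] by simp
  next
    case False
    have "k \<noteq> 0"
    proof
      assume "k = 0" then show False using D0_true[OF x] False by simp
    qed
    then show ?thesis using dag_level[OF x] False by (simp add: of_nat_diff)
  qed
  have nd: "(of_bool (\<not> ?D) :: real) = (if Lk - s < uk then 1 - (\<Sum>m\<in>{0..Mk}. indicator {real m * uk .. real m * uk + Lk - s} x) else 0)"
  proof (cases "Lk - s < uk")
    case True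
    from notD_small[OF x True] show ?thesis using True by (simp only: if_True)
  next
    case False
    then have "?D" using notD_big[OF x] by simp
    then show ?thesis using False by simp
  qed
  have "level_diff c n s x = (\<Sum>l=1..k. of_bool (\<not> (\<exists>I\<in>tree_nodes n l. {x..<x+s} \<subseteq> I))) - (of_bool (\<not> ?D) :: real)"
    unfolding level_diff_def dl using tree_level[OF x] by simp
  also have "(\<Sum>l=1..k. of_bool (\<not> (\<exists>I\<in>tree_nodes n l. {x..<x+s} \<subseteq> I)) :: real) =
     (\<Sum>l=1..k. \<Sum>j\<in>{1..<(2::nat)^l}. indicator {real j * 2^(n+1-l) - s<..<real j * 2^(n+1-l)} x)"
    by (rule sum.cong[OF refl]) (rule notT_ind[OF x])
  finally show ?thesis unfolding nd .
qed

lemma Mk_uk: "real Mk * uk = 2^(n+1) - Lk"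
proof -
  have d1: "real c - 1 \<ge> 1" using c3 by simp
  have NL: "(2::real)^k * Lk = 2^(n+1)" using pow_split[of k n] kn by (simp add: Lk_def)
  have rM: "real Mk = (real c - 1) * (2^k - 1)" using dag_M[of c k] c3 by (simp add: Mk_def)
  show ?thesis unfolding rM uk_def using d1 NL by (simp add: field_simps)
qed

definition "I1 = (\<Sum>l=1..k. \<Sum>j\<in>{1..<(2::nat)^l}. s)"
definition "I2 = (if Lk - s < uk then (2^(n+1) - s) - (\<Sum>m\<in>{0..Mk}. Lk - s) else 0)"

lemma has_int:
  assumes sN: "s < 2^(n+1)"
  shows "(level_diff c n s has_integral (I1 - I2)) {0..2^(n+1) - s}"
proof -
  define N :: real where "N = 2^(n+1)"
  have h1: "((\<lambda>x. \<Sum>l=1..k. \<Sum>j\<in>{1..<(2::nat)^l}. indicator {real j * 2^(n+1-l) - s<..<real j * 2^(n+1-l)} x)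
     has_integral I1) {0..N - s}"
    unfolding I1_def
  proof (intro has_integral_sum finite_atLeastAtMost finite_atLeastLessThan)
    fix l j assume l: "l \<in> {1..k}" and j: "j \<in> {1..<(2::nat)^l}"
    define L :: real where "L = 2^(n+1-l)"
    have h: "(2::real)^(n+1-k) \<le> 2^(n+1-l)" using l by (intro pow_mono_le) auto
    have sL: "s \<le> L" using s2 h unfolding L_def by linarith
    have NL: "(2::real)^l * L = N" using pow_split[of l n] l kn by (simp add: L_def N_def)
    have j1: "1 \<le> real j" using j by simp
    have "j + 1 \<le> 2^l" using j by simp
    then have "real (j + 1) \<le> real (2^l)" by (simp only: of_nat_le_iff)
    then have "real j + 1 \<le> 2^l" by simp
    then have j2: "(real j + 1) * L \<le> 2^l * L" by (intro mult_right_mono) (auto simp: L_def)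
    have "1 * L \<le> real j * L" using j1 by (intro mult_right_mono) (auto simp: L_def)
    then have a: "0 \<le> real j * L - s" using sL by simp
    have b: "real j * L \<le> N - s" using j2 NL sL by (simp add: algebra_simps)
    have "(indicator {real j * L - s<..<real j * L} has_integral (real j * L - (real j * L - s))) {0..N - s}"
      by (rule int_ind_open) (use a b s0 in auto)
    then show "(indicator {real j * 2^(n+1-l) - s<..<real j * 2^(n+1-l)} has_integral s) {0..N - s}"
      by (simp add: L_def)
  qed
  have h2: "((\<lambda>x. if Lk - s < uk then 1 - (\<Sum>m\<in>{0..Mk}. indicator {real m * uk .. real m * uk + Lk - s} x) else 0)
     has_integral I2) {0..N - s}"
  proof (cases "Lk - s < uk")
    case True
    have c1: "((\<lambda>x. 1::real) has_integral (N - s)) {0..N - s}"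
      using has_integral_const_real[of "1::real" 0 "N - s"] sN by (simp add: N_def)
    have u0: "uk > 0" using c3 by (simp add: uk_def Lk_def)
    have sL: "s \<le> Lk" using s2 by (simp add: Lk_def)
    have c2: "((\<lambda>x. \<Sum>m\<in>{0..Mk}. indicator {real m * uk .. real m * uk + Lk - s} x) has_integral
        (\<Sum>m\<in>{0..Mk}. Lk - s)) {0..N - s}"
    proof (intro has_integral_sum finite_atLeastAtMost)
      fix m assume m: "m \<in> {0..Mk}"
      have "real m * uk \<le> real Mk * uk" using m u0 by (intro mult_right_mono) auto
      then have b: "real m * uk + Lk - s \<le> N - s" using Mk_uk by (simp add: N_def)
      have "(indicator {real m * uk .. real m * uk + Lk - s} has_integral (real m * uk + Lk - s - real m * uk)) {0..N - s}"
        by (rule int_ind_closed) (use b sL u0 in auto)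
      then show "(indicator {real m * uk .. real m * uk + Lk - s} has_integral (Lk - s)) {0..N - s}"
        by simp
    qed
    show ?thesis using has_integral_diff[OF c1 c2] True by (simp add: I2_def N_def)
  next
    case False
    then show ?thesis by (simp add: I2_def)
  qed
  have "((\<lambda>x. (\<Sum>l=1..k. \<Sum>j\<in>{1..<(2::nat)^l}. indicator {real j * 2^(n+1-l) - s<..<real j * 2^(n+1-l)} x)
    - (if Lk - s < uk then 1 - (\<Sum>m\<in>{0..Mk}. indicator {real m * uk .. real m * uk + Lk - s} x) else 0))
     has_integral (I1 - I2)) {0..N - s}"
    by (rule has_integral_diff[OF h1 h2])
  note hi = this
  show ?thesis unfolding N_def[symmetric]
  proof (rule has_integral_eq[OF _ hi])
    fix x assume "x \<in> {0..N-s}"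
    then have "0 \<le> x" "x + s \<le> 2^(n+1)" by (auto simp: N_def)
    from diff_formula[OF this] show "(\<Sum>l=1..k. \<Sum>j\<in>{1..<(2::nat)^l}. indicator {real j * 2^(n+1-l) - s<..<real j * 2^(n+1-l)} x)
    - (if Lk - s < uk then 1 - (\<Sum>m\<in>{0..Mk}. indicator {real m * uk .. real m * uk + Lk - s} x) else 0) = level_diff c n s x"
      by simp
  qed
qed


end
context setting begin
lemma ineq_main:
  assumes sN: "s < 2^(n+1)"
  shows "(I1 - I2) / (2^(n+1) - s) < 2 * (real c - 2) / (real c - 1)"
proof -
  define d where "d = real c - 1"
  define R :: real where "R = 2^k"
  define K where "K = real k"
  define L where "L = Lk"
  have d2: "d \<ge> 2" using c3 by (simp add: d_def)
  have NRL: "(2::real)^(n+1) = R * L" using pow_split[of k n] kn by (simp add: Lk_def R_def L_def)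
  have L0: "L > 0" by (simp add: L_def Lk_def)
  have I1e: "I1 = (2*R-2-K)* s"
  proof -
    have "I1 = (\<Sum>l=1..k. ((2::real)^l - 1) * s)" unfolding I1_def
      by (rule sum.cong[OF refl]) (simp add: of_nat_diff)
    also have "\<dots> = (\<Sum>l=1..k. (2::real)^l - 1) * s" by (simp add: sum_distrib_right)
    also have "\<dots> = (2*2^k - 2 - real k) * s" by (simp only: sum_pow_minus)
    finally show ?thesis by (simp add: R_def K_def)
  qed
  have rM: "real Mk = d * (R - 1)" using dag_M[of c k] c3 by (simp add: Mk_def d_def R_def)
  have I2e: "I2 = (if L - s < L/d then (R*L - s) - (d*(R-1)+1)*(L-s) else 0)"
  proof -
    have "(\<Sum>m\<in>{0..Mk}. Lk - s) = (real Mk + 1) * (Lk - s)" by simp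
    then show ?thesis unfolding I2_def uk_def L_def[symmetric] d_def[symmetric] NRL rM by simp
  qed
  have RK: "R \<ge> 1 + K"
  proof -
    have "k < 2^k" by (rule less_exp)
    then have "real k + 1 \<le> real (2^k)" by linarith
    then show ?thesis by (simp add: R_def K_def)
  qed
  have K0: "R = 1" if "K = 0" using that by (simp add: K_def R_def)
  have K1: "K \<ge> 1" if "K \<noteq> 0" using that by (simp add: K_def)
  have sL: "s \<le> L" using s2 by (simp add: L_def Lk_def)
  have sRL: "s < R * L" using sN NRL by simp
  have main: "(if L - s < L/d then d*((2*R-2-K)* s - ((R*L - s) - (d*(R-1)+1)*(L-s))) else d*((2*R-2-K)* s))
     < 2*(d-1)*(R*L-s)"
    by (rule final_ineq[OF d2 RK _ K0 K1 L0 s0 sL sRL]) (simp add: K_def)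
  have "d * (I1 - I2) < 2*(d-1)*(R*L-s)"
  proof (cases "L - s < L/d")
    case True
    show ?thesis using main[unfolded if_P[OF True]] unfolding I1e I2e if_P[OF True] .
  next
    case False
    show ?thesis using main[unfolded if_not_P[OF False]] unfolding I1e I2e if_not_P[OF False] by simp
  qed
  moreover have pos: "R*L - s > 0" using sRL by simp
  moreover have d0: "d > 0" using d2 by simp
  ultimately have "(I1 - I2) / (R*L - s) < 2*(d-1)/d"
  proof -
    assume A: "d * (I1 - I2) < 2*(d-1)*(R*L-s)"
    have "(I1 - I2)/(R*L-s) = (d*(I1-I2)) / (d*(R*L-s))" using d0 by simp
    also have "\<dots> < (2*(d-1)*(R*L-s)) / (d*(R*L-s))"
      by (rule divide_strict_right_mono[OF A]) (use d0 pos in simp)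
    also have "\<dots> = 2*(d-1)/d" using pos by simp
    finally show ?thesis .
  qed
  moreover have c2: "real c - 2 = d - 1" by (simp add: d_def)
  ultimately show ?thesis by (simp only: NRL c2 d_def[symmetric])
qed
end

lemma exists_k:
  fixes s :: real
  assumes "1 < s"
  shows "s \<le> 2^(n+1) \<Longrightarrow> \<exists>k\<le>n. 2^(n-k) < s \<and> s \<le> 2^(n+1-k)"
proof (induction n)
  case 0 then show ?case using assms by simp
next
  case (Suc n)
  show ?case
  proof (cases "s \<le> 2^(n+1)")
    case True
    then obtain k where "k \<le> n" "2^(n-k) < s" "s \<le> 2^(n+1-k)" using Suc.IH by blast
    then show ?thesis by (intro exI[of _ "Suc k"]) simp
  next
    case False
    then show ?thesis using Suc.prems by (intro exI[of _ 0]) simp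
  qed
qed

lemma level_tree_top:
  fixes x :: nat
  assumes "x < 2^(n+1)"
  shows "level_tree n {real x..<real x + 1} = n + 1"
  unfolding level_tree_def
proof (rule Greatest_equality)
  have "{real x..<real x + 1} \<in> tree_nodes n (n+1)"
    unfolding tree_nodes_def using assms by (intro image_eqI[of _ _ x]) auto
  then show "n + 1 \<le> n + 1 \<and> (\<exists>I\<in>tree_nodes n (n + 1). {real x..<real x + 1} \<subseteq> I)" by blast
qed simp

lemma level_dag_top:
  fixes x :: nat
  assumes "x < 2^(n+1)" and c: "c \<ge> 2"
  shows "level_dag c n {real x..<real x + 1} = n + 1"
  unfolding level_dag_def
proof (rule Greatest_equality)
  have "x * (c-1) \<le> (2^(n+1) - 1) * (c-1)" using assms by (intro mult_right_mono) auto
  also have "\<dots> = (c-1)*2^(n+1)-(c-1)" by (metis diff_mult_distrib mult.commute mult_1)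
  finally have m: "x * (c-1) \<le> (c-1)*2^(n+1)-(c-1)" .
  have r: "real (x * (c-1)) * (2^(n+1-(n+1)) / (real c - 1)) = real x" using c by (simp add: of_nat_diff)
  have "\<exists>I\<in>dag_nodes c n (n+1). {real x..<real x + 1} \<subseteq> I"
  proof -
    have "\<exists>m\<le>(c-1)*2^(n+1)-(c-1). real m * (2^(n+1-(n+1)) / (real c - 1)) \<le> real x \<and>
        real x + 1 \<le> real m * (2^(n+1-(n+1)) / (real c - 1)) + 2^(n+1-(n+1))"
      using m r by (intro exI[of _ "x*(c-1)"]) simp
    then show ?thesis using dag_iff[of 1 c n "n+1" "real x"] by simp
  qed
  then show "n + 1 \<le> n + 1 \<and> (\<exists>I\<in>dag_nodes c n (n + 1). {real x..<real x + 1} \<subseteq> I)" by blast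
qed simp

lemma level_full:
  fixes n c :: nat
  shows "level_tree n {0..<0 + 2^(n+1)} = 0" "level_dag c n {0..<0 + 2^(n+1)} = 0"
proof -
  have small: "(2::real)^(n+1-y) < 2^(n+1)" if "y \<ge> 1" for y :: nat
    using that by (intro power_strict_increasing) auto
  show "level_tree n {0..<0 + 2^(n+1)} = 0" unfolding level_tree_def
  proof (rule Greatest_equality)
    show "0 \<le> n + 1 \<and> (\<exists>I\<in>tree_nodes n 0. {0..<0 + 2^(n+1)} \<subseteq> I)"
      unfolding tree_nodes_def by auto
    fix y assume "y \<le> n + 1 \<and> (\<exists>I\<in>tree_nodes n y. {0..<0 + 2^(n+1)} \<subseteq> (I::real set))"
    then have "y \<le> n+1" "\<exists>I\<in>tree_nodes n y. {0..<0 + 2^(n+1)} \<subseteq> (I::real set)" by auto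
    then have "(2::real)^(n+1) \<le> 2^(n+1-y)"
      using tree_iff[of y n 0 "2^(n+1)"] by simp
    then show "y \<le> 0" using small[of y] by (cases "y \<ge> 1") auto
  qed
  show "level_dag c n {0..<0 + 2^(n+1)} = 0" unfolding level_dag_def
  proof (rule Greatest_equality)
    show "0 \<le> n + 1 \<and> (\<exists>I\<in>dag_nodes c n 0. {0..<0 + 2^(n+1)} \<subseteq> I)"
      using dag_iff[of "2^(n+1)" c n 0 0] by simp
    fix y assume "y \<le> n + 1 \<and> (\<exists>I\<in>dag_nodes c n y. {0..<0 + 2^(n+1)} \<subseteq> (I::real set))"
    then show "y \<le> 0" using dag_small[of n y "2^(n+1)" c 0] small[of y] by (cases "y \<ge> 1") auto
  qed
qed

theorem theorem2:
  fixes n \<alpha> :: nat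
  assumes "\<alpha> \<ge> 1"
  defines "N \<equiv> (2::nat) ^ (n+1)"
      and "c \<equiv> (2::nat) ^ \<alpha> + 1"
  shows "(\<Sum>x<N. level_diff c n 1 (real x)) / real N = 0 \<and>
         (\<forall>s::real. 1 < s \<and> s \<le> real N \<longrightarrow>
           (s = real N \<longrightarrow> level_diff c n s 0 < 2 * (real c - 2) / (real c - 1)) \<and>
           (s < real N \<longrightarrow>
              (level_diff c n s) integrable_on {0..real N - s} \<and>
              integral {0..real N - s} (level_diff c n s) / (real N - s)
                < 2 * (real c - 2) / (real c - 1)))"
proof -
  have c3: "c \<ge> 3"
  proof -
    have "(2::nat)^1 \<le> 2^\<alpha>" using assms(1) by (intro power_increasing) auto
    then show ?thesis by (simp add: c_def)
  qed
  have rN: "real N = 2^(n+1)" by (simp add: N_def)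
  have part1: "(\<Sum>x<N. level_diff c n 1 (real x)) = 0"
  proof (rule sum.neutral, rule ballI)
    fix x assume "x \<in> {..<N}"
    then have x: "x < 2^(n+1)" by (simp add: N_def)
    show "level_diff c n 1 (real x) = 0"
      unfolding level_diff_def using level_tree_top[OF x] level_dag_top[OF x, of c] c3 by simp
  qed
  have bpos: "0 < 2 * (real c - 2) / (real c - 1)" using c3 by simp
  have part2: "level_diff c n s 0 < 2 * (real c - 2) / (real c - 1)" if "s = real N" for s
    using that bpos level_full unfolding level_diff_def rN by simp
  have part3: "(level_diff c n s) integrable_on {0..real N - s} \<and>
              integral {0..real N - s} (level_diff c n s) / (real N - s)
                < 2 * (real c - 2) / (real c - 1)" if s: "1 < s" "s < real N" for s
  proof -
    obtain k where k: "k \<le> n" "2^(n-k) < s" "s \<le> 2^(n+1-k)"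
      using exists_k[OF s(1), of n] s rN by auto
    interpret setting n c k s using c3 k by unfold_locales auto
    have sN: "s < 2^(n+1)" using s rN by simp
    have hi: "(level_diff c n s has_integral (I1 - I2)) {0..real N - s}" using has_int[OF sN] rN by simp
    then have "integral {0..real N - s} (level_diff c n s) = I1 - I2" by (rule integral_unique)
    then show ?thesis using hi ineq_main[OF sN] rN by (auto intro: has_integral_integrable)
  qed
  show ?thesis using part1 part2 part3 by auto
qed

end
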